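(* Let $B_n$ be the group of signed permutations of $\{\pm1,\ldots,\pm n\}$. For $\pi\in B_n$ set $\pi(0)=0$, $\mathrm{des}(\pi)=\#\{0\le i<n : \pi(i)>\pi(i+1)\}$ and $\mathrm{ides}(\pi)=\mathrm{des}(\pi^{-1})$. For $\pi$ uniformly random in $B_n$ let $X_{\mathrm{des}}=\mathrm{des}(\pi)$ and $X_{\mathrm{des}+\mathrm{ides}}=\mathrm{des}(\pi)+\mathrm{ides}(\pi)$. Then \[ \mathbb{E}(X_{\mathrm{des}+\mathrm{ides}})=n,\qquad \mathbb{V}(X_{\mathrm{des}+\mathrm{ides}}) = 2\,\mathbb{V}(X_{\mathrm{des}}) + \frac12. \]
   Context: A signed permutation is a bijection $\pi$ of $\{\pm1,\ldots,\pm n\}$ with $\pi(-i)=-\pi(i)$, written $[\pi(1),\ldots,\pi(n)]$; the convention $\pi(0)=0$ is applied to both $\pi$ and $\pi^{-1}$. *)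

theory Defs
  imports "HOL-Probability.Probability"
begin

text \<open>Signed permutations of {+-1,...,+-n}, represented as bijections of int that are odd
  (pi(-i) = -pi(i), hence pi(0) = 0) and fix every integer outside [-n, n].\<close>
definition signed_perms :: "nat \<Rightarrow> (int \<Rightarrow> int) set" where
  "signed_perms n = {\<pi>. bij \<pi> \<and> (\<forall>i. \<pi> (- i) = - \<pi> i) \<and> (\<forall>i. i \<notin> {- int n..int n} \<longrightarrow> \<pi> i = i)}"

text \<open>Descents, with the convention pi(0) = 0 (automatic from oddness).\<close>
definition des :: "nat \<Rightarrow> (int \<Rightarrow> int) \<Rightarrow> nat" where
  "des n \<pi> = card {i \<in> {0..<int n}. \<pi> i > \<pi> (i + 1)}"

definition ides :: "nat \<Rightarrow> (int \<Rightarrow> int) \<Rightarrow> nat" where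
  "ides n \<pi> = des n (inv \<pi>)"

end

theory Submission
  imports Defs
begin



definition sw :: "int \<Rightarrow> int \<Rightarrow> int \<Rightarrow> int" where
 "sw a b x = (if x = a then b else if x = b then a else if x = -a then -b else if x = -b then -a else x)"

lemma sw_sw: "a \<noteq> 0 \<Longrightarrow> b \<noteq> 0 \<Longrightarrow> sw a b (sw a b x) = x"
  by (auto simp: sw_def)

lemma sw_odd: "a \<noteq> 0 \<Longrightarrow> b \<noteq> 0 \<Longrightarrow> sw a b (- x) = - sw a b x"
  by (auto simp: sw_def)

lemma sw_in: assumes "a \<noteq> 0" "b \<noteq> 0" "\<bar>a\<bar> \<le> int n" "\<bar>b\<bar> \<le> int n"
  shows "sw a b \<in> signed_perms n"
proof -
  have "bij (sw a b)"
    by (metis assms(1,2) bij_betw_def inj_on_inverseI surj_def sw_sw)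
  moreover have "\<forall>i. i \<notin> {- int n..int n} \<longrightarrow> sw a b i = i"
    using assms by (auto simp: sw_def)
  ultimately show ?thesis using sw_odd assms unfolding signed_perms_def by auto
qed

lemma sp_bij: "\<pi> \<in> signed_perms n \<Longrightarrow> bij \<pi>" by (simp add: signed_perms_def)
lemma sp_odd: "\<pi> \<in> signed_perms n \<Longrightarrow> \<pi> (- i) = - \<pi> i" by (simp add: signed_perms_def)
lemma sp_out: "\<pi> \<in> signed_perms n \<Longrightarrow> i \<notin> {- int n..int n} \<Longrightarrow> \<pi> i = i" by (simp add: signed_perms_def)
lemma sp_0: "\<pi> \<in> signed_perms n \<Longrightarrow> \<pi> 0 = 0"
  using sp_odd[of \<pi> n 0] by simp
lemma sp_inj: "\<pi> \<in> signed_perms n \<Longrightarrow> \<pi> x = \<pi> y \<longleftrightarrow> x = y"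
  using sp_bij bij_is_inj inj_eq by metis
lemma sp_zero: "\<pi> \<in> signed_perms n \<Longrightarrow> \<pi> x = 0 \<longleftrightarrow> x = 0"
  using sp_inj sp_0 by metis
lemma sp_range: assumes "\<pi> \<in> signed_perms n" "\<bar>x\<bar> \<le> int n" shows "\<bar>\<pi> x\<bar> \<le> int n"
proof (rule ccontr)
  assume na: "\<not> ?thesis"
  then have "\<pi> x \<notin> {- int n..int n}" by auto
  then have "\<pi> (\<pi> x) = \<pi> x" using sp_out[OF assms(1), of "\<pi> x"] by auto
  then have "\<pi> x = x" using sp_inj[OF assms(1)] by blast
  then show False using na assms(2) by simp
qed

lemma sp_inv: assumes "\<pi> \<in> signed_perms n" shows "inv \<pi> \<in> signed_perms n"
proof -
  have b: "bij \<pi>" using sp_bij[OF assms] .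
  have "bij (inv \<pi>)" using b by (simp add: bij_imp_bij_inv)
  moreover have "inv \<pi> (- i) = - inv \<pi> i" for i
  proof -
    have "\<pi> (- inv \<pi> i) = - i" using sp_odd[OF assms] surj_f_inv_f[OF bij_is_surj[OF b]] by simp
    then show ?thesis using b by (metis bij_inv_eq_iff)
  qed
  moreover have "inv \<pi> i = i" if "i \<notin> {- int n..int n}" for i
    using sp_out[OF assms that] b by (metis bij_inv_eq_iff)
  ultimately show ?thesis unfolding signed_perms_def by auto
qed

lemma sp_comp: "\<pi> \<in> signed_perms n \<Longrightarrow> \<sigma> \<in> signed_perms n \<Longrightarrow> \<pi> \<circ> \<sigma> \<in> signed_perms n"
  unfolding signed_perms_def by (auto intro: bij_comp)

lemma sp_id: "id \<in> signed_perms n"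
  unfolding signed_perms_def by auto

lemma sp_finite: "finite (signed_perms n)"
proof -
  let ?A = "{- int n..int n}"
  have "inj_on (\<lambda>\<pi>. restrict \<pi> ?A) (signed_perms n)"
  proof
    fix \<pi> \<sigma> assume "\<pi> \<in> signed_perms n" "\<sigma> \<in> signed_perms n" "restrict \<pi> ?A = restrict \<sigma> ?A"
    then show "\<pi> = \<sigma>"
      by (metis (no_types, lifting) restrict_apply' sp_out ext)
  qed
  moreover have "(\<lambda>\<pi>. restrict \<pi> ?A) ` signed_perms n \<subseteq> PiE ?A (\<lambda>_. ?A)"
    using sp_range by (fastforce simp: abs_le_iff)
  moreover have "finite (PiE ?A (\<lambda>_. ?A))" by (simp add: finite_PiE)
  ultimately show ?thesis by (meson finite_imageD finite_subset)
qed




lemma sw_order_pos: assumes "i > 0" "x \<noteq> y"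
  shows "(sw i (i+1) y < sw i (i+1) x) \<longleftrightarrow> (if (x = i \<and> y = i+1) \<or> (x = i+1 \<and> y = i) \<or> (x = -i \<and> y = -(i+1)) \<or> (x = -(i+1) \<and> y = -i) then \<not> (y < x) else y < x)"
  using assms unfolding sw_def by auto

lemma sw_order_0: assumes "x \<noteq> y"
  shows "(sw 1 (-1) y < sw 1 (-1) x) \<longleftrightarrow> (if (x = 0 \<and> (y = 1 \<or> y = -1)) \<or> (y = 0 \<and> (x = 1 \<or> x = -1)) \<or> (x = 1 \<and> y = -1) \<or> (x = -1 \<and> y = 1) then \<not> (y < x) else y < x)"
  using assms unfolding sw_def by auto




lemma four_lemma:
  fixes S :: "'a set" and \<sigma> :: "'a \<Rightarrow> 'a" and A B E :: "'a \<Rightarrow> bool"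
  assumes fin: "finite S" and bij: "bij_betw \<sigma> S S"
    and hA: "\<forall>\<pi>\<in>S. A (\<sigma> \<pi>) = (\<not> A \<pi>)"
    and hB: "\<forall>\<pi>\<in>S. B (\<sigma> \<pi>) = (if E \<pi> then \<not> B \<pi> else B \<pi>)"
    and hEB: "\<forall>\<pi>\<in>S. E \<pi> \<longrightarrow> B \<pi> = A \<pi>"
    and hE: "\<forall>\<pi>\<in>S. E (\<sigma> \<pi>) = E \<pi>"
  shows "4 * (\<Sum>\<pi>\<in>S. of_bool (A \<pi> \<and> B \<pi>) :: real) = 2 * (\<Sum>\<pi>\<in>S. of_bool (B \<pi>)) + (\<Sum>\<pi>\<in>S. of_bool (E \<pi>))"
proof -
  have r: "(\<Sum>\<pi>\<in>S. f (\<sigma> \<pi>)) = sum f S" for f :: "'a \<Rightarrow> real"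
    using sum.reindex_bij_betw[OF bij] by blast
  have 1: "(\<Sum>\<pi>\<in>S. of_bool (A \<pi> \<and> B \<pi>) + of_bool (A (\<sigma> \<pi>) \<and> B (\<sigma> \<pi>)) :: real)
      = (\<Sum>\<pi>\<in>S. of_bool (B \<pi>) + of_bool (E \<pi> \<and> \<not> B \<pi>))"
    by (rule sum.cong) (use hA hB hEB in auto)
  have 2: "(\<Sum>\<pi>\<in>S. of_bool (E \<pi> \<and> \<not> B \<pi>) + of_bool (E (\<sigma> \<pi>) \<and> \<not> B (\<sigma> \<pi>)) :: real)
      = (\<Sum>\<pi>\<in>S. of_bool (E \<pi>))"
    by (rule sum.cong) (use hE hB in auto)
  have r1: "(\<Sum>\<pi>\<in>S. of_bool (A (\<sigma> \<pi>) \<and> B (\<sigma> \<pi>)) :: real) = (\<Sum>\<pi>\<in>S. of_bool (A \<pi> \<and> B \<pi>))"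
    using r[of "\<lambda>\<pi>. of_bool (A \<pi> \<and> B \<pi>)"] by simp
  have r2: "(\<Sum>\<pi>\<in>S. of_bool (E (\<sigma> \<pi>) \<and> \<not> B (\<sigma> \<pi>)) :: real) = (\<Sum>\<pi>\<in>S. of_bool (E \<pi> \<and> \<not> B \<pi>))"
    using r[of "\<lambda>\<pi>. of_bool (E \<pi> \<and> \<not> B \<pi>)"] by simp
  have h1: "2 * (\<Sum>\<pi>\<in>S. of_bool (A \<pi> \<and> B \<pi>) :: real)
      = (\<Sum>\<pi>\<in>S. of_bool (B \<pi>)) + (\<Sum>\<pi>\<in>S. of_bool (E \<pi> \<and> \<not> B \<pi>))"
    using 1 r1 by (simp add: sum.distrib)
  have h2: "2 * (\<Sum>\<pi>\<in>S. of_bool (E \<pi> \<and> \<not> B \<pi>) :: real) = (\<Sum>\<pi>\<in>S. of_bool (E \<pi>))"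
    using 2 r2 by (simp add: sum.distrib)
  show ?thesis using h1 h2 by linarith
qed

lemma flip_lemma:
  fixes S :: "'a set" and \<sigma> :: "'a \<Rightarrow> 'a" and A :: "'a \<Rightarrow> bool"
  assumes bij: "bij_betw \<sigma> S S"
    and hA: "\<forall>\<pi>\<in>S. A (\<sigma> \<pi>) = (\<not> A \<pi>)"
  shows "2 * (\<Sum>\<pi>\<in>S. of_bool (A \<pi>) :: real) = card S"
proof -
  have r: "(\<Sum>\<pi>\<in>S. f (\<sigma> \<pi>)) = sum f S" for f :: "'a \<Rightarrow> real"
    using sum.reindex_bij_betw[OF bij] by blast
  have "(\<Sum>\<pi>\<in>S. of_bool (A \<pi>) + of_bool (A (\<sigma> \<pi>)) :: real) = (\<Sum>\<pi>\<in>S. 1)"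
    by (rule sum.cong) (use hA in auto)
  moreover have "(\<Sum>\<pi>\<in>S. of_bool (A (\<sigma> \<pi>)) :: real) = (\<Sum>\<pi>\<in>S. of_bool (A \<pi>))"
    using r[of "\<lambda>\<pi>. of_bool (A \<pi>)"] by simp
  ultimately show ?thesis by (simp add: sum.distrib)
qed

lemma des_sum: "real (des n \<pi>) = (\<Sum>i\<in>{0..<int n}. of_bool (\<pi> (i+1) < \<pi> i))"
proof -
  have "{i \<in> {0..<int n}. \<pi> i > \<pi> (i + 1)} = {0..<int n} \<inter> {i. \<pi> (i+1) < \<pi> i}" by auto
  then show ?thesis unfolding des_def by simp
qed

lemma bij_inv_sp: "bij_betw inv (signed_perms n) (signed_perms n)"
  by (rule bij_betw_byWitness[where f'=inv]) (auto simp: sp_inv inv_inv_eq sp_bij)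

lemma bij_rcomp: assumes "s \<in> signed_perms n" "\<And>x. s (s x) = x"
  shows "bij_betw (\<lambda>\<pi>. \<pi> \<circ> s) (signed_perms n) (signed_perms n)"
  by (rule bij_betw_byWitness[where f'="\<lambda>\<pi>. \<pi> \<circ> s"]) (auto simp: sp_comp assms fun_eq_iff)

lemma bij_lcomp: assumes "s \<in> signed_perms n" "t \<in> signed_perms n" "\<And>x. t (s x) = x" "\<And>x. s (t x) = x"
  shows "bij_betw (\<lambda>\<pi>. s \<circ> \<pi>) (signed_perms n) (signed_perms n)"
  by (rule bij_betw_byWitness[where f'="\<lambda>\<pi>. t \<circ> \<pi>"]) (auto simp: sp_comp assms fun_eq_iff)




lemma inv_iff: "\<pi> \<in> signed_perms n \<Longrightarrow> inv \<pi> x = y \<longleftrightarrow> \<pi> y = x"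
  using sp_bij by (metis bij_inv_eq_iff)

definition ss :: "int \<Rightarrow> int \<Rightarrow> int" where
  "ss i = (if i = 0 then sw 1 (-1) else sw i (i+1))"

definition CC :: "int \<Rightarrow> int \<Rightarrow> (int \<Rightarrow> int) \<Rightarrow> bool" where
  "CC i j \<pi> = ((i = 0 \<and> j = 0 \<and> (\<pi> 1 = 1 \<or> \<pi> 1 = -1)) \<or>
     (i \<noteq> 0 \<and> j \<noteq> 0 \<and> ((\<pi> i = j \<and> \<pi> (i+1) = j+1) \<or> (\<pi> i = j+1 \<and> \<pi> (i+1) = j) \<or>
        (\<pi> i = -j \<and> \<pi> (i+1) = -(j+1)) \<or> (\<pi> i = -(j+1) \<and> \<pi> (i+1) = -j))))"

lemma ss_0: "ss 0 = sw 1 (-1)" by (simp add: ss_def)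
lemma ss_pos: "i \<noteq> 0 \<Longrightarrow> ss i = sw i (i+1)" by (simp add: ss_def)

lemma ss_in: "n \<ge> 1 \<Longrightarrow> 0 \<le> i \<Longrightarrow> i < int n \<Longrightarrow> ss i \<in> signed_perms n"
  unfolding ss_def by (auto intro!: sw_in)

lemma ss_ss: "0 \<le> i \<Longrightarrow> ss i (ss i x) = x"
  unfolding ss_def by (auto simp: sw_sw)

lemma inv_ss: "0 \<le> i \<Longrightarrow> inv (ss i) = ss i"
  by (metis ss_ss inv_equality)

lemma A_flip: assumes "\<pi> \<in> signed_perms n" "0 \<le> i"
  shows "((\<pi> \<circ> ss i) (i+1) < (\<pi> \<circ> ss i) i) = (\<not> (\<pi> (i+1) < \<pi> i))"
proof (cases "i = 0")
  case True
  have "\<pi> 1 \<noteq> 0" using sp_zero[OF assms(1)] by simp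
  then show ?thesis using True sp_odd[OF assms(1), of 1] sp_0[OF assms(1)] by (auto simp: ss_def sw_def)
next
  case False
  have "\<pi> i \<noteq> \<pi> (i+1)" using sp_inj[OF assms(1)] by simp
  then show ?thesis using False assms(2) by (auto simp: ss_def sw_def)
qed

lemma inv_comp_ss: assumes "\<pi> \<in> signed_perms n" "n \<ge> 1" "0 \<le> i" "i < int n"
  shows "inv (\<pi> \<circ> ss i) = ss i \<circ> inv \<pi>"
  using o_inv_distrib[OF sp_bij[OF assms(1)] sp_bij[OF ss_in[OF assms(2-4)]]] inv_ss[OF assms(3)] by simp

lemma B_flip: assumes "\<pi> \<in> signed_perms n" "n \<ge> 1" "0 \<le> i" "i < int n" "0 \<le> j" "j < int n"
  shows "(inv (\<pi> \<circ> ss i) (j+1) < inv (\<pi> \<circ> ss i) j) =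
    (if CC i j \<pi> then \<not> (inv \<pi> (j+1) < inv \<pi> j) else inv \<pi> (j+1) < inv \<pi> j)"
proof -
  have ip: "inv \<pi> \<in> signed_perms n" using sp_inv[OF assms(1)] .
  have ne: "inv \<pi> j \<noteq> inv \<pi> (j+1)" using sp_inj[OF ip] by simp
  have od: "\<pi> (- x) = - \<pi> x" for x using sp_odd[OF assms(1)] .
  note ii = inv_iff[OF assms(1)]
  have gen: "inv \<pi> a = b \<longleftrightarrow> \<pi> b = a" for a b using ii .
  have genm: "inv \<pi> a = - b \<longleftrightarrow> \<pi> b = - a" for a b using ii[of a "-b"] od[of b] by auto
  have x0: "inv \<pi> j = 0 \<longleftrightarrow> j = 0" using sp_zero[OF ip] .
  have y0: "inv \<pi> (j+1) \<noteq> 0" using sp_zero[OF ip] assms(5) by simp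
  show ?thesis
  proof (cases "i = 0")
    case True
    have c: "((inv \<pi> j = 0 \<and> (inv \<pi> (j+1) = 1 \<or> inv \<pi> (j+1) = -1)) \<or> (inv \<pi> (j+1) = 0 \<and> (inv \<pi> j = 1 \<or> inv \<pi> j = -1))
        \<or> (inv \<pi> j = 1 \<and> inv \<pi> (j+1) = -1) \<or> (inv \<pi> j = -1 \<and> inv \<pi> (j+1) = 1)) \<longleftrightarrow> CC i j \<pi>"
    proof (cases "j = 0")
      case True
      then show ?thesis using \<open>i = 0\<close> x0 y0 gen[of 1 1] genm[of 1 1] by (auto simp: CC_def)
    next
      case False
      have "\<not> (inv \<pi> j = 1 \<and> inv \<pi> (j+1) = -1)"
      proof
        assume "inv \<pi> j = 1 \<and> inv \<pi> (j+1) = -1"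
        then have "\<pi> 1 = j" "\<pi> 1 = -(j+1)" using gen[of j 1] genm[of "j+1" 1] by auto
        then show False using assms(5) by simp
      qed
      moreover have "\<not> (inv \<pi> j = -1 \<and> inv \<pi> (j+1) = 1)"
      proof
        assume "inv \<pi> j = -1 \<and> inv \<pi> (j+1) = 1"
        then have "\<pi> 1 = -j" "\<pi> 1 = j+1" using genm[of j 1] gen[of "j+1" 1] by auto
        then show False using assms(5) by simp
      qed
      ultimately show ?thesis using False x0 y0 \<open>i = 0\<close> by (auto simp: CC_def)
    qed
    show ?thesis
      unfolding inv_comp_ss[OF assms(1-4)] unfolding o_apply True ss_0
      unfolding sw_order_0[OF ne] using c True by simp
  next
    case False
    then have ip0: "i > 0" using assms(3) by simp
    have c: "((inv \<pi> j = i \<and> inv \<pi> (j+1) = i+1) \<or> (inv \<pi> j = i+1 \<and> inv \<pi> (j+1) = i) \<or>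
       (inv \<pi> j = -i \<and> inv \<pi> (j+1) = -(i+1)) \<or> (inv \<pi> j = -(i+1) \<and> inv \<pi> (j+1) = -i)) \<longleftrightarrow> CC i j \<pi>"
    proof (cases "j = 0")
      case True
      then have "inv \<pi> j = 0" using x0 by simp
      then show ?thesis using True ip0 by (auto simp: CC_def)
    next
      case False
      show ?thesis unfolding CC_def unfolding genm unfolding gen using False \<open>i \<noteq> 0\<close>
        by auto
    qed
    show ?thesis
      unfolding inv_comp_ss[OF assms(1-4)] unfolding o_apply ss_pos[OF False]
      unfolding sw_order_pos[OF ip0 ne] using c False by simp
  qed
qed

lemma C_B_A: assumes "\<pi> \<in> signed_perms n" "CC i j \<pi>"
  shows "(inv \<pi> (j+1) < inv \<pi> j) = (\<pi> (i+1) < \<pi> i)"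
proof -
  have od: "\<pi> (- x) = - \<pi> x" for x using sp_odd[OF assms(1)] .
  have inv_eq: "inv \<pi> x = y" if "\<pi> y = x" for x y using inv_iff[OF assms(1)] that by blast
  show ?thesis using assms(2) unfolding CC_def
  proof (elim disjE conjE)
    assume "i = 0" "j = 0" "\<pi> 1 = 1"
    then show ?thesis using inv_eq[where x=1 and y=1] inv_eq[where x=0 and y=0] sp_0[OF assms(1)] by simp
  next
    assume "i = 0" "j = 0" "\<pi> 1 = -1"
    then show ?thesis using inv_eq[where x=1 and y="-1"] inv_eq[where x=0 and y=0] sp_0[OF assms(1)] od[of 1] by simp
  next
    assume "\<pi> i = j" "\<pi> (i+1) = j+1"
    then show ?thesis using inv_eq[where x=j and y=i] inv_eq[where x="j+1" and y="i+1"] by simp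
  next
    assume "\<pi> i = j+1" "\<pi> (i+1) = j"
    then show ?thesis using inv_eq[where x=j and y="i+1"] inv_eq[where x="j+1" and y="i"] by simp
  next
    assume "\<pi> i = -j" "\<pi> (i+1) = -(j+1)"
    then show ?thesis using inv_eq[where x=j and y="-i"] inv_eq[where x="j+1" and y="-(i+1)"] od[of i] od[of "i+1"] by simp
  next
    assume "\<pi> i = -(j+1)" "\<pi> (i+1) = -j"
    then show ?thesis using inv_eq[where x=j and y="-(i+1)"] inv_eq[where x="j+1" and y="-i"] od[of i] od[of "i+1"] by simp
  qed
qed

lemma C_inv: assumes "\<pi> \<in> signed_perms n" "0 \<le> i"
  shows "CC i j (\<pi> \<circ> ss i) = CC i j \<pi>"
proof (cases "i = 0")
  case True
  then show ?thesis using sp_odd[OF assms(1), of 1] by (auto simp: CC_def ss_def sw_def)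
next
  case False
  then show ?thesis using assms(2) by (auto simp: CC_def ss_def sw_def)
qed




definition VV :: "nat \<Rightarrow> int set" where "VV n = {x. x \<noteq> 0 \<and> \<bar>x\<bar> \<le> int n}"

lemma sw_a: "a \<noteq> 0 \<Longrightarrow> sw a b a = b" by (simp add: sw_def)
lemma sw_ma: "a \<noteq> 0 \<Longrightarrow> b \<noteq> 0 \<Longrightarrow> sw a b (-a) = -b" by (auto simp: sw_def)
lemma sw_fix: "x \<noteq> a \<Longrightarrow> x \<noteq> b \<Longrightarrow> x \<noteq> -a \<Longrightarrow> x \<noteq> -b \<Longrightarrow> sw a b x = x" by (simp add: sw_def)

lemma sp_VV: "\<pi> \<in> signed_perms n \<Longrightarrow> x \<in> VV n \<Longrightarrow> \<pi> x \<in> VV n"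
  unfolding VV_def using sp_range sp_zero by blast

lemma fiber_card_eq:
  assumes "\<tau> \<in> signed_perms n" "\<tau>' \<in> signed_perms n" "\<And>x. \<tau>' (\<tau> x) = x" "\<And>x. \<tau> (\<tau>' x) = x"
    and PQ: "\<And>\<pi>. \<pi> \<in> signed_perms n \<Longrightarrow> Q (\<tau> \<circ> \<pi>) \<longleftrightarrow> P \<pi>"
  shows "card {\<pi> \<in> signed_perms n. P \<pi>} = card {\<pi> \<in> signed_perms n. Q \<pi>}"
proof (rule bij_betw_same_card)
  have e1: "\<tau>' \<circ> (\<tau> \<circ> \<pi>) = \<pi>" for \<pi> using assms(3) by (simp add: fun_eq_iff)
  have e2: "\<tau> \<circ> (\<tau>' \<circ> \<pi>) = \<pi>" for \<pi> using assms(4) by (simp add: fun_eq_iff)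
  show "bij_betw (\<lambda>\<pi>. \<tau> \<circ> \<pi>) {\<pi> \<in> signed_perms n. P \<pi>} {\<pi> \<in> signed_perms n. Q \<pi>}"
  proof (rule bij_betw_byWitness[where f'="\<lambda>\<pi>. \<tau>' \<circ> \<pi>"])
    show "\<forall>a\<in>{\<pi> \<in> signed_perms n. P \<pi>}. \<tau>' \<circ> (\<tau> \<circ> a) = a" using e1 by blast
    show "\<forall>a\<in>{\<pi> \<in> signed_perms n. Q \<pi>}. \<tau> \<circ> (\<tau>' \<circ> a) = a" using e2 by blast
    show "(\<circ>) \<tau> ` {\<pi> \<in> signed_perms n. P \<pi>} \<subseteq> {\<pi> \<in> signed_perms n. Q \<pi>}"
      using PQ sp_comp[OF assms(1)] by auto
    show "(\<circ>) \<tau>' ` {\<pi> \<in> signed_perms n. Q \<pi>} \<subseteq> {\<pi> \<in> signed_perms n. P \<pi>}"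
    proof
      fix \<sigma> assume "\<sigma> \<in> (\<circ>) \<tau>' ` {\<pi> \<in> signed_perms n. Q \<pi>}"
      then obtain \<pi> where p: "\<pi> \<in> signed_perms n" "Q \<pi>" "\<sigma> = \<tau>' \<circ> \<pi>" by auto
      have s: "\<sigma> \<in> signed_perms n" using p sp_comp[OF assms(2)] by simp
      have "\<tau> \<circ> \<sigma> = \<pi>" unfolding p(3) by (rule e2)
      then have "Q (\<tau> \<circ> \<sigma>)" using p(2) by simp
      then show "\<sigma> \<in> {\<pi> \<in> signed_perms n. P \<pi>}" using PQ[OF s] s by simp
    qed
  qed
qed

lemma VV_ne: "x \<in> VV n \<Longrightarrow> x \<noteq> 0" by (simp add: VV_def)
lemma VV_le: "x \<in> VV n \<Longrightarrow> \<bar>x\<bar> \<le> int n" by (simp add: VV_def)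

lemma F1_eq: assumes "v \<in> VV n" "v' \<in> VV n"
  shows "card {\<pi> \<in> signed_perms n. \<pi> p = v} = card {\<pi> \<in> signed_perms n. \<pi> p = v'}"
proof -
  let ?t = "sw v v'"
  have t: "?t \<in> signed_perms n" using assms by (auto intro!: sw_in simp: VV_def)
  have tt: "?t (?t x) = x" for x using assms sw_sw by (simp add: VV_def)
  show ?thesis
  proof (rule fiber_card_eq[OF t t tt tt])
    fix \<pi> assume "\<pi> \<in> signed_perms n"
    have "?t (\<pi> p) = v' \<longleftrightarrow> \<pi> p = v"
      by (metis VV_ne assms(1) sw_a tt)
    then show "((?t \<circ> \<pi>) p = v') = (\<pi> p = v)" by simp
  qed
qed

lemma F2_eq: assumes "v \<in> VV n" "w \<in> VV n" "v' \<in> VV n" "w' \<in> VV n" "\<bar>v\<bar> \<noteq> \<bar>w\<bar>" "\<bar>v'\<bar> \<noteq> \<bar>w'\<bar>"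
  shows "card {\<pi> \<in> signed_perms n. \<pi> p = v \<and> \<pi> q = w} = card {\<pi> \<in> signed_perms n. \<pi> p = v' \<and> \<pi> q = w'}"
proof -
  let ?t1 = "sw v v'"
  have t1: "?t1 \<in> signed_perms n" using assms by (auto intro!: sw_in simp: VV_def)
  have t1t1: "?t1 (?t1 x) = x" for x using assms sw_sw by (simp add: VV_def)
  define w1 where "w1 = ?t1 w"
  have w1: "w1 \<in> VV n" unfolding w1_def using sp_VV[OF t1 assms(2)] .
  have ne1: "w1 \<noteq> v'" unfolding w1_def using assms(5) t1t1 sw_a[OF VV_ne[OF assms(1)]] by metis
  have ne2: "w1 \<noteq> -v'" unfolding w1_def
    using assms(5) t1t1 sw_ma[OF VV_ne[OF assms(1)] VV_ne[OF assms(3)]] by (metis abs_minus_cancel)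
  let ?t2 = "sw w1 w'"
  have t2: "?t2 \<in> signed_perms n" using assms w1 by (auto intro!: sw_in simp: VV_def)
  have t2t2: "?t2 (?t2 x) = x" for x using assms w1 sw_sw by (simp add: VV_def)
  have fixv: "?t2 v' = v'"
    using ne1 ne2 assms(6) by (auto intro!: sw_fix)
  let ?t = "?t2 \<circ> ?t1" and ?t' = "?t1 \<circ> ?t2"
  have t: "?t \<in> signed_perms n" "?t' \<in> signed_perms n" using sp_comp t1 t2 by auto
  have tt: "?t' (?t x) = x" "?t (?t' x) = x" for x using t1t1 t2t2 by auto
  have tv: "?t v = v'" using fixv sw_a[OF VV_ne[OF assms(1)]] by simp
  have tw: "?t w = w'" using sw_a[OF VV_ne[OF w1]] by (simp add: w1_def)
  have inj: "?t x = ?t y \<longleftrightarrow> x = y" for x y by (metis tt(1))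
  show ?thesis
  proof (rule fiber_card_eq[OF t tt])
    fix \<pi> assume "\<pi> \<in> signed_perms n"
    show "((?t \<circ> \<pi>) p = v' \<and> (?t \<circ> \<pi>) q = w') = (\<pi> p = v \<and> \<pi> q = w)"
      using inj[of "\<pi> p" v] inj[of "\<pi> q" w] tv tw by (simp only: o_apply)
  qed
qed

lemma card_VV: "card (VV n) = 2 * n"
proof -
  have "VV n = {- int n..-1} \<union> {1..int n}" unfolding VV_def by auto
  moreover have "card ({- int n..-1} \<union> {1..int n}) = n + n"
    by (subst card_Un_disjoint) auto
  ultimately show ?thesis by simp
qed

lemma finite_VV: "finite (VV n)"
proof -
  have "VV n \<subseteq> {- int n..int n}" unfolding VV_def by auto
  then show ?thesis using finite_subset by blast
qed




lemma sum_card_conv: "finite S \<Longrightarrow> (\<Sum>x\<in>S. of_bool (P x) :: real) = real (card {x\<in>S. P x})"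
proof -
  assume f: "finite S"
  have "{x\<in>S. P x} = S \<inter> {x. P x}" by auto
  then show ?thesis using f by simp
qed

lemma one_VV: "n \<ge> 1 \<Longrightarrow> (1::int) \<in> VV n" by (simp add: VV_def)

lemma U1: assumes "n \<ge> 1"
  shows "real n * (\<Sum>\<pi>\<in>signed_perms n. of_bool (\<pi> 1 = 1 \<or> \<pi> 1 = -1)) = real (card (signed_perms n))"
proof -
  let ?S = "signed_perms n"
  define c1 where "c1 = card {\<pi>\<in>?S. \<pi> 1 = 1}"
  have all: "card {\<pi>\<in>?S. \<pi> 1 = v} = c1" if "v \<in> VV n" for v
    unfolding c1_def using F1_eq[OF that one_VV[OF assms]] .
  have "sum (\<lambda>y. sum (\<lambda>_. 1::nat) {x. x \<in> ?S \<and> x 1 = y}) (VV n) = sum (\<lambda>_. 1) ?S"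
    by (rule sum.group) (use sp_finite finite_VV sp_VV one_VV[OF assms] in auto)
  then have "card ?S = (\<Sum>v\<in>VV n. card {\<pi>\<in>?S. \<pi> 1 = v})" by simp
  also have "\<dots> = 2 * n * c1" using all card_VV by simp
  finally have N: "card ?S = 2 * n * c1" .
  have m1: "(-1::int) \<in> VV n" using assms by (simp add: VV_def)
  have "(\<Sum>\<pi>\<in>?S. of_bool (\<pi> 1 = 1 \<or> \<pi> 1 = -1) :: real) = (\<Sum>\<pi>\<in>?S. of_bool (\<pi> 1 = 1) + of_bool (\<pi> 1 = -1))"
    by (rule sum.cong) auto
  also have "\<dots> = real (card {\<pi>\<in>?S. \<pi> 1 = 1}) + real (card {\<pi>\<in>?S. \<pi> 1 = -1})"
    by (simp add: sum.distrib sum_card_conv[OF sp_finite])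
  also have "\<dots> = 2 * c1" using all[OF one_VV[OF assms]] all[OF m1] by simp
  finally show ?thesis using N by simp
qed

lemma U2: assumes "1 \<le> i" "i < int n" "1 \<le> j" "j < int n"
  shows "real n * real (n - 1) * (\<Sum>\<pi>\<in>signed_perms n. of_bool (CC i j \<pi>)) = real (card (signed_perms n))"
proof -
  let ?S = "signed_perms n"
  have n2: "n \<ge> 2" using assms by linarith
  have v1: "(1::int) \<in> VV n" and v2: "(2::int) \<in> VV n" using n2 by (auto simp: VV_def)
  define c where "c = card {\<pi>\<in>?S. \<pi> i = 1 \<and> \<pi> (i+1) = 2}"
  have all: "card {\<pi>\<in>?S. \<pi> i = v \<and> \<pi> (i+1) = w} = c" if "v \<in> VV n" "w \<in> VV n" "\<bar>v\<bar> \<noteq> \<bar>w\<bar>" for v w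
    unfolding c_def using F2_eq[OF that(1,2) v1 v2 that(3)] by simp
  let ?P = "SIGMA v:VV n. VV n - {v, -v}"
  have sub: "(\<lambda>\<pi>. (\<pi> i, \<pi> (i+1))) ` ?S \<subseteq> ?P"
  proof
    fix x assume "x \<in> (\<lambda>\<pi>. (\<pi> i, \<pi> (i+1))) ` ?S"
    then obtain \<pi> where p: "\<pi> \<in> ?S" "x = (\<pi> i, \<pi> (i+1))" by auto
    have a: "\<pi> i \<in> VV n" "\<pi> (i+1) \<in> VV n" using sp_VV[OF p(1)] assms by (auto simp: VV_def)
    have "\<pi> (i+1) \<noteq> \<pi> i" using sp_inj[OF p(1)] by simp
    moreover have "\<pi> (i+1) \<noteq> - \<pi> i"
      using sp_inj[OF p(1), of "i+1" "-i"] sp_odd[OF p(1), of i] assms(1) by auto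
    ultimately show "x \<in> ?P" using a p(2) by auto
  qed
  have finP: "finite ?P" using finite_VV by auto
  have "sum (\<lambda>y. sum (\<lambda>_. 1::nat) {x. x \<in> ?S \<and> (x i, x (i+1)) = y}) ?P = sum (\<lambda>_. 1) ?S"
    by (rule sum.group[OF sp_finite finP sub])
  then have "card ?S = (\<Sum>y\<in>?P. card {\<pi>\<in>?S. (\<pi> i, \<pi> (i+1)) = y})" by simp
  also have "\<dots> = (\<Sum>y\<in>?P. c)"
  proof (rule sum.cong)
    fix y assume "y \<in> ?P"
    then obtain v w where y: "y = (v, w)" "v \<in> VV n" "w \<in> VV n" "w \<noteq> v" "w \<noteq> -v" by auto
    then have "\<bar>v\<bar> \<noteq> \<bar>w\<bar>" by (auto simp: abs_if split: if_splits)
    then show "card {\<pi>\<in>?S. (\<pi> i, \<pi> (i+1)) = y} = c" using all[OF y(2,3)] y(1) by simp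
  qed simp
  also have "\<dots> = card ?P * c" by simp
  also have "card ?P = (\<Sum>v\<in>VV n. card (VV n - {v, -v}))"
    using finite_VV by (simp add: card_SigmaI)
  also have "\<dots> = (\<Sum>v\<in>VV n. 2 * n - 2)"
  proof (rule sum.cong)
    fix v assume v: "v \<in> VV n"
    have "v \<noteq> -v" using VV_ne[OF v] by simp
    moreover have "{v, -v} \<subseteq> VV n" using v by (auto simp: VV_def)
    ultimately show "card (VV n - {v, -v}) = 2 * n - 2"
      using card_Diff_subset[of "{v, -v}" "VV n"] card_VV by simp
  qed simp
  also have "\<dots> = 2 * n * (2 * n - 2)" using card_VV by simp
  finally have N: "card ?S = 2 * n * (2 * n - 2) * c" .
  have jv: "j \<in> VV n" "j+1 \<in> VV n" "-j \<in> VV n" "-(j+1) \<in> VV n" using assms by (auto simp: VV_def)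
  have "(\<Sum>\<pi>\<in>?S. of_bool (CC i j \<pi>) :: real) = (\<Sum>\<pi>\<in>?S. of_bool (\<pi> i = j \<and> \<pi> (i+1) = j+1)
     + of_bool (\<pi> i = j+1 \<and> \<pi> (i+1) = j) + of_bool (\<pi> i = -j \<and> \<pi> (i+1) = -(j+1))
     + of_bool (\<pi> i = -(j+1) \<and> \<pi> (i+1) = -j))"
    by (rule sum.cong) (use assms in \<open>auto simp: CC_def\<close>)
  also have "\<dots> = real (card {\<pi>\<in>?S. \<pi> i = j \<and> \<pi> (i+1) = j+1}) + real (card {\<pi>\<in>?S. \<pi> i = j+1 \<and> \<pi> (i+1) = j})
     + real (card {\<pi>\<in>?S. \<pi> i = -j \<and> \<pi> (i+1) = -(j+1)}) + real (card {\<pi>\<in>?S. \<pi> i = -(j+1) \<and> \<pi> (i+1) = -j})"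
    by (simp add: sum.distrib sum_card_conv[OF sp_finite])
  also have "\<dots> = 4 * c"
    using all[OF jv(1,2)] all[OF jv(2,1)] all[OF jv(3,4)] all[OF jv(4,3)] assms by simp
  finally have "(\<Sum>\<pi>\<in>?S. of_bool (CC i j \<pi>) :: real) = 4 * c" .
  moreover have "real (card ?S) = 2 * real n * (2 * real n - 2) * c" using N n2 by (simp add: of_nat_diff)
  ultimately show ?thesis using n2 by (simp add: of_nat_diff algebra_simps)
qed




lemma sum_inv_sp: "(\<Sum>\<pi>\<in>signed_perms n. f (inv \<pi>)) = (\<Sum>\<pi>\<in>signed_perms n. f \<pi>)"
  using sum.reindex_bij_betw[OF bij_inv_sp] by blast

lemma half_A: assumes "n \<ge> 1" "0 \<le> i" "i < int n"
  shows "2 * (\<Sum>\<pi>\<in>signed_perms n. of_bool (\<pi> (i+1) < \<pi> i) :: real) = real (card (signed_perms n))"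
proof (rule flip_lemma)
  show "bij_betw (\<lambda>\<pi>. \<pi> \<circ> ss i) (signed_perms n) (signed_perms n)"
    using bij_rcomp[OF ss_in[OF assms] ss_ss[OF assms(2)]] .
  show "\<forall>\<pi>\<in>signed_perms n. ((\<pi> \<circ> ss i) (i + 1) < (\<pi> \<circ> ss i) i) = (\<not> \<pi> (i + 1) < \<pi> i)"
    using A_flip assms(2) by blast
qed

lemma half_B: assumes "n \<ge> 1" "0 \<le> j" "j < int n"
  shows "2 * (\<Sum>\<pi>\<in>signed_perms n. of_bool (inv \<pi> (j+1) < inv \<pi> j) :: real) = real (card (signed_perms n))"
  using half_A[OF assms] sum_inv_sp[where n=n and f="\<lambda>\<pi>. of_bool (\<pi> (j+1) < \<pi> j) :: real"] by simp

lemma pair_lemma: assumes "n \<ge> 1" "0 \<le> i" "i < int n" "0 \<le> j" "j < int n"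
  shows "4 * (\<Sum>\<pi>\<in>signed_perms n. of_bool (\<pi> (i+1) < \<pi> i) * of_bool (inv \<pi> (j+1) < inv \<pi> j) :: real)
    = real (card (signed_perms n)) + (\<Sum>\<pi>\<in>signed_perms n. of_bool (CC i j \<pi>))"
proof -
  have "4 * (\<Sum>\<pi>\<in>signed_perms n. of_bool (\<pi> (i+1) < \<pi> i \<and> inv \<pi> (j+1) < inv \<pi> j) :: real)
    = 2 * (\<Sum>\<pi>\<in>signed_perms n. of_bool (inv \<pi> (j+1) < inv \<pi> j)) + (\<Sum>\<pi>\<in>signed_perms n. of_bool (CC i j \<pi>))"
  proof (rule four_lemma[where \<sigma>="\<lambda>\<pi>. \<pi> \<circ> ss i"])
    show "finite (signed_perms n)" by (rule sp_finite)
    show "bij_betw (\<lambda>\<pi>. \<pi> \<circ> ss i) (signed_perms n) (signed_perms n)"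
      using bij_rcomp[OF ss_in[OF assms(1-3)] ss_ss[OF assms(2)]] .
    show "\<forall>\<pi>\<in>signed_perms n. ((\<pi> \<circ> ss i) (i + 1) < (\<pi> \<circ> ss i) i) = (\<not> \<pi> (i + 1) < \<pi> i)"
      using A_flip assms(2) by blast
    show "\<forall>\<pi>\<in>signed_perms n. (inv (\<pi> \<circ> ss i) (j + 1) < inv (\<pi> \<circ> ss i) j) =
        (if CC i j \<pi> then \<not> inv \<pi> (j + 1) < inv \<pi> j else inv \<pi> (j + 1) < inv \<pi> j)"
      using B_flip assms by blast
    show "\<forall>\<pi>\<in>signed_perms n. CC i j \<pi> \<longrightarrow> (inv \<pi> (j + 1) < inv \<pi> j) = (\<pi> (i + 1) < \<pi> i)"
      using C_B_A by blast
    show "\<forall>\<pi>\<in>signed_perms n. CC i j (\<pi> \<circ> ss i) = CC i j \<pi>"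
      using C_inv assms(2) by blast
  qed
  moreover have "(\<Sum>\<pi>\<in>signed_perms n. of_bool (\<pi> (i+1) < \<pi> i \<and> inv \<pi> (j+1) < inv \<pi> j) :: real)
     = (\<Sum>\<pi>\<in>signed_perms n. of_bool (\<pi> (i+1) < \<pi> i) * of_bool (inv \<pi> (j+1) < inv \<pi> j))"
    by (rule sum.cong) auto
  ultimately show ?thesis using half_B[OF assms(1,4,5)] by simp
qed

lemma ides_sum: "real (ides n \<pi>) = (\<Sum>j\<in>{0..<int n}. of_bool (inv \<pi> (j+1) < inv \<pi> j))"
  unfolding ides_def by (rule des_sum)

lemma CC_0j: "j \<noteq> 0 \<Longrightarrow> \<not> CC 0 j \<pi>" by (simp add: CC_def)
lemma CC_i0: "i \<noteq> 0 \<Longrightarrow> \<not> CC i 0 \<pi>" by (simp add: CC_def)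

lemma sum_split0: "n \<ge> 1 \<Longrightarrow> (\<Sum>i\<in>{0..<int n}. g i) = g 0 + (\<Sum>i\<in>{1..<int n}. g i)"
proof -
  assume "n \<ge> 1"
  then have "{0..<int n} = insert 0 {1..<int n}" by auto
  then show ?thesis by simp
qed

lemma CC_total: assumes "n \<ge> 1"
  shows "(\<Sum>i\<in>{0..<int n}. \<Sum>j\<in>{0..<int n}. \<Sum>\<pi>\<in>signed_perms n. of_bool (CC i j \<pi>) :: real) = real (card (signed_perms n))"
proof -
  let ?S = "signed_perms n" and ?N = "real (card (signed_perms n))"
  have I: "{0..<int n} = insert 0 {1..<int n}" using assms by auto
  have row0: "(\<Sum>j\<in>{0..<int n}. \<Sum>\<pi>\<in>?S. of_bool (CC 0 j \<pi>) :: real) = ?N / real n"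
  proof -
    have "(\<Sum>j\<in>{0..<int n}. \<Sum>\<pi>\<in>?S. of_bool (CC 0 j \<pi>) :: real) = (\<Sum>\<pi>\<in>?S. of_bool (CC 0 0 \<pi>))"
      unfolding I using CC_0j by simp
    also have "\<dots> = (\<Sum>\<pi>\<in>?S. of_bool (\<pi> 1 = 1 \<or> \<pi> 1 = -1))" by (simp add: CC_def)
    also have "\<dots> = ?N / real n" using U1[OF assms] assms by (simp add: field_simps)
    finally show ?thesis .
  qed
  have rowi: "(\<Sum>j\<in>{0..<int n}. \<Sum>\<pi>\<in>?S. of_bool (CC i j \<pi>) :: real) = ?N / real n" if i: "i \<in> {1..<int n}" for i
  proof -
    have "(\<Sum>j\<in>{0..<int n}. \<Sum>\<pi>\<in>?S. of_bool (CC i j \<pi>) :: real) = (\<Sum>j\<in>{1..<int n}. \<Sum>\<pi>\<in>?S. of_bool (CC i j \<pi>))"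
      unfolding I using CC_i0 i by simp
    also have "\<dots> = (\<Sum>j\<in>{1..<int n}. ?N / (real n * real (n - 1)))"
    proof (rule sum.cong)
      fix j assume j: "j \<in> {1..<int n}"
      have "n \<ge> 2" using i by auto
      then have "real n * real (n - 1) \<noteq> 0" by simp
      then show "(\<Sum>\<pi>\<in>?S. of_bool (CC i j \<pi>)) = ?N / (real n * real (n - 1))"
        using U2[of i n j] i j by (simp add: field_simps)
    qed simp
    also have "\<dots> = real (n - 1) * (?N / (real n * real (n - 1)))"
    proof -
      have "nat (int n - 1) = n - 1" by arith
      then show ?thesis by simp
    qed
    also have "\<dots> = ?N / real n"
    proof -
      have "n \<ge> 2" using i by auto
      then show ?thesis by (simp add: field_simps)
    qed
    finally show ?thesis .
  qed
  have "(\<Sum>i\<in>{0..<int n}. \<Sum>j\<in>{0..<int n}. \<Sum>\<pi>\<in>?S. of_bool (CC i j \<pi>) :: real)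
      = ?N / real n + (\<Sum>i\<in>{1..<int n}. ?N / real n)"
    apply (subst sum_split0[where g="\<lambda>i. \<Sum>j\<in>{0..<int n}. \<Sum>\<pi>\<in>?S. of_bool (CC i j \<pi>) :: real", OF assms])
    apply (subst row0)
    apply (rule arg_cong[where f="\<lambda>x. ?N / real n + x"])
    apply (rule sum.cong)
    using rowi by simp_all
  also have "\<dots> = ?N / real n + real (n - 1) * (?N / real n)"
  proof -
    have "nat (int n - 1) = n - 1" by arith
    then show ?thesis by simp
  qed
  also have "\<dots> = ?N" using assms by (simp add: field_simps of_nat_diff)
  finally show ?thesis .
qed




lemma main_sums: assumes "n \<ge> 1"
  shows "(\<Sum>\<pi>\<in>signed_perms n. real (des n \<pi>)) = real n * real (card (signed_perms n)) / 2"
    and "(\<Sum>\<pi>\<in>signed_perms n. real (ides n \<pi>)) = real n * real (card (signed_perms n)) / 2"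
    and "(\<Sum>\<pi>\<in>signed_perms n. real (ides n \<pi>) ^ 2) = (\<Sum>\<pi>\<in>signed_perms n. real (des n \<pi>) ^ 2)"
    and "4 * (\<Sum>\<pi>\<in>signed_perms n. real (des n \<pi>) * real (ides n \<pi>)) = (real n ^ 2 + 1) * real (card (signed_perms n))"
proof -
  let ?S = "signed_perms n" and ?N = "real (card (signed_perms n))" and ?I = "{0..<int n}"
  have "(\<Sum>\<pi>\<in>?S. real (des n \<pi>)) = (\<Sum>i\<in>?I. \<Sum>\<pi>\<in>?S. of_bool (\<pi> (i+1) < \<pi> i))"
    unfolding des_sum by (rule sum.swap)
  also have "\<dots> = (\<Sum>i\<in>?I. ?N / 2)"
    by (rule sum.cong) (use half_A[OF assms] in \<open>auto simp: field_simps\<close>)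
  also have "\<dots> = real n * ?N / 2" by simp
  finally show sd: "(\<Sum>\<pi>\<in>?S. real (des n \<pi>)) = real n * ?N / 2" .
  have inv1: "(\<Sum>\<pi>\<in>?S. real (ides n \<pi>)) = (\<Sum>\<pi>\<in>?S. real (des n \<pi>))"
    unfolding ides_def by (rule sum_inv_sp)
  then show "(\<Sum>\<pi>\<in>?S. real (ides n \<pi>)) = real n * ?N / 2" using sd by simp
  show "(\<Sum>\<pi>\<in>?S. real (ides n \<pi>) ^ 2) = (\<Sum>\<pi>\<in>?S. real (des n \<pi>) ^ 2)"
    unfolding ides_def by (rule sum_inv_sp)
  have "(\<Sum>\<pi>\<in>?S. real (des n \<pi>) * real (ides n \<pi>))
      = (\<Sum>\<pi>\<in>?S. \<Sum>i\<in>?I. \<Sum>j\<in>?I. of_bool (\<pi> (i+1) < \<pi> i) * of_bool (inv \<pi> (j+1) < inv \<pi> j))"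
    unfolding des_sum ides_sum sum_product by simp
  also have "\<dots> = (\<Sum>i\<in>?I. \<Sum>\<pi>\<in>?S. \<Sum>j\<in>?I. of_bool (\<pi> (i+1) < \<pi> i) * of_bool (inv \<pi> (j+1) < inv \<pi> j))"
    by (rule sum.swap)
  also have "\<dots> = (\<Sum>i\<in>?I. \<Sum>j\<in>?I. \<Sum>\<pi>\<in>?S. of_bool (\<pi> (i+1) < \<pi> i) * of_bool (inv \<pi> (j+1) < inv \<pi> j))"
    by (rule sum.cong[OF refl], rule sum.swap)
  finally have e1: "4 * (\<Sum>\<pi>\<in>?S. real (des n \<pi>) * real (ides n \<pi>))
     = (\<Sum>i\<in>?I. \<Sum>j\<in>?I. 4 * (\<Sum>\<pi>\<in>?S. of_bool (\<pi> (i+1) < \<pi> i) * of_bool (inv \<pi> (j+1) < inv \<pi> j)))"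
    by (simp add: sum_distrib_left)
  also have "\<dots> = (\<Sum>i\<in>?I. \<Sum>j\<in>?I. ?N + (\<Sum>\<pi>\<in>?S. of_bool (CC i j \<pi>)))"
    by (intro sum.cong refl) (use pair_lemma[OF assms] in auto)
  also have "\<dots> = (\<Sum>i\<in>?I. \<Sum>j\<in>?I. ?N) + (\<Sum>i\<in>?I. \<Sum>j\<in>?I. \<Sum>\<pi>\<in>?S. of_bool (CC i j \<pi>))"
    by (simp add: sum.distrib)
  also have "\<dots> = real n * real n * ?N + ?N"
    using CC_total[OF assms] by simp
  finally show "4 * (\<Sum>\<pi>\<in>?S. real (des n \<pi>) * real (ides n \<pi>)) = (real n ^ 2 + 1) * ?N"
    by (simp add: power2_eq_square algebra_simps)
qed




theorem proposition5p7:
  fixes n :: nat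
  assumes "n \<ge> 1"
  shows "measure_pmf.expectation (pmf_of_set (signed_perms n)) (\<lambda>\<pi>. real (des n \<pi> + ides n \<pi>)) = real n
    \<and> measure_pmf.variance (pmf_of_set (signed_perms n)) (\<lambda>\<pi>. real (des n \<pi> + ides n \<pi>))
      = 2 * measure_pmf.variance (pmf_of_set (signed_perms n)) (\<lambda>\<pi>. real (des n \<pi>)) + 1 / 2"
proof -
  let ?S = "signed_perms n"
  let ?N = "real (card ?S)"
  have ne: "?S \<noteq> {}" using sp_id by blast
  have fin: "finite ?S" by (rule sp_finite)
  have Npos: "?N > 0" using ne fin by (simp add: card_gt_0_iff)
  note int = integral_pmf_of_set[OF ne fin]
  note ms = main_sums[OF assms]
  define D2 where "D2 = (\<Sum>\<pi>\<in>?S. real (des n \<pi>) ^ 2)"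
  have E1: "measure_pmf.expectation (pmf_of_set ?S) (\<lambda>\<pi>. real (des n \<pi> + ides n \<pi>)) = real n"
    unfolding int using ms(1,2) Npos by (simp add: sum.distrib field_simps)
  have E2: "measure_pmf.expectation (pmf_of_set ?S) (\<lambda>\<pi>. real (des n \<pi>)) = real n / 2"
    unfolding int using ms(1) Npos by (simp add: field_simps)
  have V1: "(\<Sum>\<pi>\<in>?S. (real (des n \<pi> + ides n \<pi>) - real n)^2)
      = D2 + D2 + 2 * (\<Sum>\<pi>\<in>?S. real (des n \<pi>) * real (ides n \<pi>))
        - 2 * real n * (\<Sum>\<pi>\<in>?S. real (des n \<pi>)) - 2 * real n * (\<Sum>\<pi>\<in>?S. real (ides n \<pi>)) + real n ^ 2 * ?N"
  proof -
    have "(\<Sum>\<pi>\<in>?S. (real (des n \<pi> + ides n \<pi>) - real n)^2)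
      = (\<Sum>\<pi>\<in>?S. real (des n \<pi>) ^ 2 + real (ides n \<pi>) ^ 2 + 2 * (real (des n \<pi>) * real (ides n \<pi>))
          - 2 * real n * real (des n \<pi>) - 2 * real n * real (ides n \<pi>) + real n ^ 2)"
      by (rule sum.cong) (simp_all add: power2_eq_square algebra_simps)
    also have "\<dots> = (\<Sum>\<pi>\<in>?S. real (des n \<pi>) ^ 2) + (\<Sum>\<pi>\<in>?S. real (ides n \<pi>) ^ 2)
        + 2 * (\<Sum>\<pi>\<in>?S. real (des n \<pi>) * real (ides n \<pi>))
        - 2 * real n * (\<Sum>\<pi>\<in>?S. real (des n \<pi>)) - 2 * real n * (\<Sum>\<pi>\<in>?S. real (ides n \<pi>)) + real n ^ 2 * ?N"
      by (simp add: sum.distrib sum_subtractf sum_distrib_left)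
    finally show ?thesis using ms(3) unfolding D2_def by simp
  qed
  have V2: "(\<Sum>\<pi>\<in>?S. (real (des n \<pi>) - real n / 2)^2)
      = D2 - real n * (\<Sum>\<pi>\<in>?S. real (des n \<pi>)) + real n ^ 2 / 4 * ?N"
  proof -
    have "(\<Sum>\<pi>\<in>?S. (real (des n \<pi>) - real n / 2)^2)
      = (\<Sum>\<pi>\<in>?S. real (des n \<pi>) ^ 2 - real n * real (des n \<pi>) + real n ^ 2 / 4)"
      by (rule sum.cong) (simp_all add: power2_eq_square algebra_simps)
    also have "\<dots> = D2 - real n * (\<Sum>\<pi>\<in>?S. real (des n \<pi>)) + real n ^ 2 / 4 * ?N"
      unfolding D2_def by (simp add: sum.distrib sum_subtractf sum_distrib_left)
    finally show ?thesis .
  qed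
  have "measure_pmf.variance (pmf_of_set ?S) (\<lambda>\<pi>. real (des n \<pi> + ides n \<pi>))
      = (\<Sum>\<pi>\<in>?S. (real (des n \<pi> + ides n \<pi>) - real n)^2) / ?N"
    unfolding E1 unfolding int ..
  also have "\<dots> = 2 * ((\<Sum>\<pi>\<in>?S. (real (des n \<pi>) - real n / 2)^2) / ?N) + 1 / 2"
    unfolding V1 V2 using ms(1,2,4) Npos by (simp add: field_simps power2_eq_square)
  also have "(\<Sum>\<pi>\<in>?S. (real (des n \<pi>) - real n / 2)^2) / ?N
      = measure_pmf.variance (pmf_of_set ?S) (\<lambda>\<pi>. real (des n \<pi>))"
    unfolding E2 unfolding int ..
  finally show ?thesis using E1 by simp
qed


end
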